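(* Let $k\geq 8$ and $3k\leq n\leq 4k$ be integers, and let $h(n,k)=\binom{n-1}{k-1}-\binom{n-k-1}{k-1}+1$. Then \[ \binom{n}{k-2}+\frac{h(n,k)^2}{\binom{n}{k-2}}>2\binom{n-1}{k-1}. \] *)

theory Defs
  imports Complex_Main
begin

definition h :: "nat \<Rightarrow> nat \<Rightarrow> real" where
  "h n k = real ((n - 1) choose (k - 1)) - real ((n - k - 1) choose (k - 1)) + 1"

end

theory Submission imports Defs begin

definition Q :: "nat \<Rightarrow> nat \<Rightarrow> bool" where
 "Q n k \<longleftrightarrow> 2 * (real n - real k - 1)^(k-1) * ((real n - real k + 2)*(real n - real k + 1))^2
    \<le> ((real n - real k + 2)*(real n - real k + 1) - real n * (real k - 1))^2 * (real n - 1)^(k-1)"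
lemma Q8: assumes "24 \<le> n" "n \<le> 32" shows "Q n 8"
proof -
  have "n = 24 \<or> n = 25 \<or> n = 26 \<or> n = 27 \<or> n = 28 \<or> n = 29 \<or> n = 30 \<or> n = 31 \<or> n = 32" using assms by presburger
  then show ?thesis by (elim disjE) (simp_all add: Q_def)
qed
lemma Q9: assumes "27 \<le> n" "n \<le> 36" shows "Q n 9"
proof -
  have "n = 27 \<or> n = 28 \<or> n = 29 \<or> n = 30 \<or> n = 31 \<or> n = 32 \<or> n = 33 \<or> n = 34 \<or> n = 35 \<or> n = 36" using assms by presburger
  then show ?thesis by (elim disjE) (simp_all add: Q_def)
qed
lemma Q10: assumes "30 \<le> n" "n \<le> 40" shows "Q n 10"
proof -
  have "n = 30 \<or> n = 31 \<or> n = 32 \<or> n = 33 \<or> n = 34 \<or> n = 35 \<or> n = 36 \<or> n = 37 \<or> n = 38 \<or> n = 39 \<or> n = 40" using assms by presburger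
  then show ?thesis by (elim disjE) (simp_all add: Q_def)
qed
lemma Q11: assumes "33 \<le> n" "n \<le> 44" shows "Q n 11"
proof -
  have "n = 33 \<or> n = 34 \<or> n = 35 \<or> n = 36 \<or> n = 37 \<or> n = 38 \<or> n = 39 \<or> n = 40 \<or> n = 41 \<or> n = 42 \<or> n = 43 \<or> n = 44" using assms by presburger
  then show ?thesis by (elim disjE) (simp_all add: Q_def)
qed
lemma Q12: assumes "36 \<le> n" "n \<le> 48" shows "Q n 12"
proof -
  have "n = 36 \<or> n = 37 \<or> n = 38 \<or> n = 39 \<or> n = 40 \<or> n = 41 \<or> n = 42 \<or> n = 43 \<or> n = 44 \<or> n = 45 \<or> n = 46 \<or> n = 47 \<or> n = 48" using assms by presburger
  then show ?thesis by (elim disjE) (simp_all add: Q_def)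
qed
lemma Q13: assumes "39 \<le> n" "n \<le> 52" shows "Q n 13"
proof -
  have "n = 39 \<or> n = 40 \<or> n = 41 \<or> n = 42 \<or> n = 43 \<or> n = 44 \<or> n = 45 \<or> n = 46 \<or> n = 47 \<or> n = 48 \<or> n = 49 \<or> n = 50 \<or> n = 51 \<or> n = 52" using assms by presburger
  then show ?thesis by (elim disjE) (simp_all add: Q_def)
qed

lemma binom_step_nat: "Suc j * (m choose Suc j) = (m - j) * (m choose j)"
  using binomial_absorption[of j m] binomial_absorb_comp[of m j] by simp

lemma binom_step: "real (m choose Suc j) * real (Suc j) = real (m choose j) * (real m - real j)"
proof (cases "j \<le> m")
  case True
  have "real (Suc j * (m choose Suc j)) = real ((m - j) * (m choose j))"
    using binom_step_nat by metis
  then show ?thesis using True by (simp add: of_nat_diff algebra_simps)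
next
  case False
  then show ?thesis by (simp add: binomial_eq_0)
qed

lemma ratio:
  assumes "m \<le> M"
  shows "real (m choose j) * real M ^ j \<le> real (M choose j) * real m ^ j"
proof (induction j)
  case 0
  then show ?case by simp
next
  case (Suc j)
  show ?case
  proof (cases "j < m")
    case False
    then have z: "real (m choose Suc j) = 0" by (simp add: binomial_eq_0)
    show ?thesis unfolding z by simp
  next
    case True
    have m1: "(real m - real j) * real M \<le> (real M - real j) * real m"
    proof -
      have "real j * real m \<le> real j * real M" using assms by (simp add: mult_left_mono)
      then show ?thesis by (simp add: algebra_simps)
    qed
    have nn: "0 \<le> (real m - real j) * real M" using True by simp
    have "real (m choose Suc j) * real M ^ Suc j * real (Suc j)
          = (real (m choose Suc j) * real (Suc j)) * (real M ^ j * real M)"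
      by (simp only: power_Suc mult_ac)
    also have "\<dots> = (real (m choose j) * (real m - real j)) * (real M ^ j * real M)"
      by (simp only: binom_step)
    also have "\<dots> = (real (m choose j) * real M ^ j) * ((real m - real j) * real M)"
      by (simp only: mult_ac)
    also have "\<dots> \<le> (real (M choose j) * real m ^ j) * ((real m - real j) * real M)"
      using Suc.IH nn by (rule mult_right_mono)
    also have "\<dots> \<le> (real (M choose j) * real m ^ j) * ((real M - real j) * real m)"
      using m1 by (rule mult_left_mono) simp
    also have "\<dots> = (real (M choose j) * (real M - real j)) * (real m ^ j * real m)"
      by (simp only: mult_ac)
    also have "\<dots> = (real (M choose Suc j) * real (Suc j)) * (real m ^ j * real m)"
      by (simp only: binom_step)
    also have "\<dots> = real (M choose Suc j) * real m ^ Suc j * real (Suc j)"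
      by (simp only: power_Suc mult_ac)
    finally show ?thesis by simp
  qed
qed

lemma Qbig:
  assumes "k \<ge> 14" "3 * k \<le> n" "n \<le> 4 * k"
  shows "Q n k"
proof -
  define D where "D = (real n - real k + 2)*(real n - real k + 1)"
  define E where "E = D - real n * (real k - 1)"
  define P where "P = (real n - real k - 1)^(k-1)"
  define M where "M = (real n - 1)^(k-1)"
  have kr: "real k \<ge> 14" "3 * real k \<le> real n" "real n \<le> 4 * real k" using assms by linarith+
  have hE: "4 * (real n * (real k - 1)) \<le> 3 * D"
  proof -
    define N where "N = real n - real k"
    have N2: "N \<ge> 2 * real k" unfolding N_def using kr by linarith
    have f1: "(3 * N + 2 * real k) * (N - 2 * real k) \<ge> 0" using N2 kr by (intro mult_nonneg_nonneg) auto
    have f2: "4 * ((N + real k) * (real k - 1)) \<le> 4 * ((N + real k) * real k)"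
      using N2 kr by (intro mult_left_mono) auto
    have "D = (N + 2) * (N + 1)" unfolding D_def N_def by simp
    moreover have "real n = N + real k" unfolding N_def by simp
    ultimately show ?thesis using f1 f2 N2 kr by (simp add: algebra_simps)
  qed
  have Dpos: "D > 0" unfolding D_def using kr by (simp add: mult_pos_pos)
  have E1: "E \<ge> D / 4" using hE unfolding E_def by linarith
  have E2: "E^2 \<ge> D^2 / 16"
  proof -
    have "(D/4)^2 \<le> E^2" using E1 Dpos by (intro power_mono) auto
    then show ?thesis by (simp add: power2_eq_square)
  qed
  have b1': "4 * (real n - real k - 1) \<le> 3 * (real n - 1)" using kr(3) by simp
  have b1: "real n - real k - 1 \<le> 3/4 * (real n - 1)" using b1' by simp
  have b0: "0 \<le> real n - real k - 1" using kr by linarith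
  have "P \<le> (3/4 * (real n - 1))^(k-1)" unfolding P_def using b1 b0 by (rule power_mono)
  also have "\<dots> = (3/4)^(k-1) * M" unfolding M_def by (simp only: power_mult_distrib)
  finally have P1: "P \<le> (3/4)^(k-1) * M" .
  have "(3/4::real)^(k-1) \<le> (3/4)^13" using assms by (intro power_decreasing) auto
  also have "\<dots> \<le> 1/32" by (simp add: power_divide)
  finally have t: "(3/4::real)^(k-1) \<le> 1/32" .
  have Mpos: "M \<ge> 0" unfolding M_def using kr by simp
  have "(3/4)^(k-1) * M \<le> 1/32 * M" by (rule mult_right_mono[OF t Mpos])
  then have "P \<le> M / 32" using P1 by simp
  then have "2 * P \<le> 2 * (M/32)" by simp
  then have "2 * P * D^2 \<le> 2 * (M/32) * D^2" by (rule mult_right_mono) simp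
  also have "\<dots> = M * (D^2/16)" by simp
  also have "\<dots> \<le> M * E^2" using E2 Mpos by (rule mult_left_mono)
  finally show ?thesis unfolding Q_def P_def M_def D_def E_def by (simp add: mult.commute)
qed

theorem lemma2p10:
  fixes n k :: nat
  assumes "k \<ge> 8" and "3 * k \<le> n" and "n \<le> 4 * k"
  shows "real (n choose (k - 2)) + (h n k)^2 / real (n choose (k - 2))
           > 2 * real ((n - 1) choose (k - 1))"
proof -
  define a where "a = real (n choose (k - 2))"
  define b where "b = real ((n - 1) choose (k - 1))"
  define c where "c = real ((n - k - 1) choose (k - 1))"
  define D where "D = (real n - real k + 2)*(real n - real k + 1)"
  define E where "E = D - real n * (real k - 1)"
  define P where "P = (real n - real k - 1)^(k-1)"
  define M where "M = (real n - 1)^(k-1)"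
  have kr: "real k \<ge> 8" "3 * real k \<le> real n" "real n \<le> 4 * real k" using assms by linarith+
  have Q: "Q n k"
  proof (cases "k \<le> 13")
    case True
    then have "k = 8 \<or> k = 9 \<or> k = 10 \<or> k = 11 \<or> k = 12 \<or> k = 13" using assms by linarith
    then show ?thesis using assms Q8 Q9 Q10 Q11 Q12 Q13 by auto
  next
    case False
    then show ?thesis using assms Qbig by simp
  qed
  then have Q': "2 * P * D^2 \<le> E^2 * M" unfolding Q_def P_def D_def E_def M_def .
  have apos: "a > 0" unfolding a_def using assms by simp
  have Dpos: "D > 0" unfolding D_def using kr by (simp add: mult_pos_pos)
  have Mpos: "M > 0" unfolding M_def using kr by simp
  have bnn: "b \<ge> 0" unfolding b_def by simp
  have cnn: "c \<ge> 0" unfolding c_def by simp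
  define j where "j = k - 2"
  have j: "k = Suc (Suc j)" unfolding j_def using assms by simp
  have jn: "j \<le> n" "Suc j \<le> n - 1" using assms j by linarith+
  have r1: "(real n - real j) * a = real n * real ((n - 1) choose j)"
  proof -
    have "real ((n - j) * (n choose j)) = real (n * ((n - 1) choose j))"
      using binomial_absorb_comp[of n j] by metis
    then show ?thesis using jn unfolding a_def j by (simp add: of_nat_diff)
  qed
  have r2: "real ((n - 1) choose j) * (real n - 1 - real j) = b * real (Suc j)"
    using binom_step[of "n - 1" j] jn unfolding b_def j by (simp add: of_nat_diff)
  have F1: "a * D = real n * (real k - 1) * b"
  proof -
    have "a * D = ((real n - real j) * a) * (real n - 1 - real j)"
      unfolding D_def j by (simp add: algebra_simps)
    also have "\<dots> = real n * (real ((n - 1) choose j) * (real n - 1 - real j))"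
      using r1 by simp
    also have "\<dots> = real n * (real k - 1) * b" using r2 j by simp
    finally show ?thesis .
  qed
  have F2: "c * M \<le> b * P"
  proof -
    have e1: "real n - 1 = real (n - 1)" "real n - real k - 1 = real (n - k - 1)"
      using assms by (simp_all add: of_nat_diff)
    show ?thesis unfolding c_def b_def M_def P_def e1 by (rule ratio) simp
  qed
  have PM: "P \<le> M" unfolding P_def M_def using kr by (intro power_mono) auto
  have cb: "c \<le> b"
  proof -
    have "c * M \<le> b * M" using F2 PM bnn by (smt (verit) mult_left_mono)
    then show ?thesis using Mpos by simp
  qed
  have key0: "(b - a) * D = b * E" unfolding E_def using F1 by (simp add: algebra_simps)
  have "((b - a)^2) * (D^2 * M) = b^2 * (E^2 * M)"
    using key0 by (metis power_mult_distrib mult.assoc mult.commute)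
  also have "\<dots> \<ge> b^2 * (2 * P * D^2)" using Q' by (simp add: mult_left_mono)
  finally have "b^2 * (2 * P * D^2) \<le> ((b - a)^2) * (D^2 * M)" .
  moreover have "(2 * b * c) * (D^2 * M) \<le> b^2 * (2 * P * D^2)"
  proof -
    have "(2 * b * c) * (D^2 * M) = (2 * b * D^2) * (c * M)" by (simp add: algebra_simps)
    also have "\<dots> \<le> (2 * b * D^2) * (b * P)" using F2 bnn by (intro mult_left_mono) auto
    also have "\<dots> = b^2 * (2 * P * D^2)" by (simp add: algebra_simps power2_eq_square)
    finally show ?thesis .
  qed
  ultimately have "(2 * b * c) * (D^2 * M) \<le> ((b - a)^2) * (D^2 * M)" by linarith
  then have key: "2 * b * c \<le> (b - a)^2" using Dpos Mpos by (simp add: mult_le_cancel_right)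
  have hh: "h n k = b - c + 1"
    unfolding h_def b_def c_def by simp
  have "(b - c)^2 < (h n k)^2" unfolding hh using cb by (intro power_strict_mono) auto
  moreover have "a^2 + (b-c)^2 - 2*a*b = (b-a)^2 - 2*b*c + c^2"
    by (simp add: power2_eq_square algebra_simps)
  moreover have "c^2 \<ge> 0" by simp
  ultimately have "a^2 + (h n k)^2 > 2 * a * b"
    using key by linarith
  then have "a * a + (h n k)^2 > 2 * b * a" by (simp add: power2_eq_square algebra_simps)
  then have "(a * a + (h n k)^2) / a > 2 * b" using apos by (simp add: pos_less_divide_eq)
  then show ?thesis unfolding a_def[symmetric] b_def[symmetric] using apos
    by (simp add: add_divide_distrib power2_eq_square)
qed

end
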